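(* For the order-$M$ Tensor Train model described in the context, the boundary ranks are identifiable via $$r_1=\frac{v_{\{1,2\}}\,v_{\{3\}}}{v_{\{2\}}\,v_{\{1,3\}}}\quad(M\ge3),\qquad r_{M-1}=\frac{v_{\{M-1,M\}}\,v_{\{M-3\}}}{v_{\{M\}}\,v_{\{M-3,M-1\}}}\quad(M\ge4).$$
   Context: Tensor Train (TT) model of order $M$ with TT-ranks $(r_1,\dots,r_{M-1})$: $\eta_{i_1\dots i_M}=\sum_{k_1=1}^{r_1}\cdots\sum_{k_{M-1}=1}^{r_{M-1}}\theta^{(1)}_{1,i_1,k_1}\theta^{(2)}_{k_1,i_2,k_2}\cdots\theta^{(M)}_{k_{M-1},i_M,1}$, where the entries of core $p$ are i.i.d. with mean $\mu_p$ and variance $\sigma_p^2$, independent across cores. Conditional on $\boldsymbol\eta$, the $Y_{\mathbf i}$ are independent with $\mathbb E[Y_{\mathbf i}\mid\boldsymbol\eta]=\eta_{\mathbf i}$. For $S\subseteq\{1,\dots,M\}$, $C_S:=\mathrm{Cov}(Y_{\mathbf i},Y_{\mathbf j})$ for multi-indices with $i_k=j_k$ for $k\in S$ and $i_k\ne j_k$ for $k\notin S$, with $C_\emptyset=0$; $v_S:=\sum_{S'\subseteq S}(-1)^{|S|-|S'|}C_{S'}$. *)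

theory Defs
  imports "HOL-Probability.Probability"
begin

text \<open>Modes are 1..m, with mode sizes n p.
  Bond dimensions: bond 0 = bond m = 1 and bond k = r k for 0 < k < m.
  Core entries theta p a i b with a < bond (p-1), i < n p, b < bond p (0-based).\<close>

definition bond :: "nat \<Rightarrow> (nat \<Rightarrow> nat) \<Rightarrow> nat \<Rightarrow> nat" where
  "bond m r k = (if 0 < k \<and> k < m then r k else 1)"

definition bond_tuples :: "nat \<Rightarrow> (nat \<Rightarrow> nat) \<Rightarrow> (nat \<Rightarrow> nat) set" where
  "bond_tuples m r = {k. \<forall>j. k j < bond m r j}"

definition multi_idx :: "nat \<Rightarrow> (nat \<Rightarrow> nat) \<Rightarrow> (nat \<Rightarrow> nat) set" where
  "multi_idx m n = {i. \<forall>p. i p < (if p \<in> {1..m} then n p else 1)}"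

definition core_entries :: "nat \<Rightarrow> (nat \<Rightarrow> nat) \<Rightarrow> (nat \<Rightarrow> nat) \<Rightarrow> (nat \<times> nat \<times> nat \<times> nat) set" where
  "core_entries m n r = {(p, a, i, b). p \<in> {1..m} \<and> a < bond m r (p - 1) \<and> i < n p \<and> b < bond m r p}"

definition tt_eta :: "nat \<Rightarrow> (nat \<Rightarrow> nat) \<Rightarrow> (nat \<Rightarrow> nat \<Rightarrow> nat \<Rightarrow> nat \<Rightarrow> 'a \<Rightarrow> real)
    \<Rightarrow> (nat \<Rightarrow> nat) \<Rightarrow> 'a \<Rightarrow> real" where
  "tt_eta m r \<theta> i \<omega> = (\<Sum>k\<in>bond_tuples m r. \<Prod>p\<in>{1..m}. \<theta> p (k (p - 1)) (i p) (k p) \<omega>)"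

definition cov :: "'a measure \<Rightarrow> ('a \<Rightarrow> real) \<Rightarrow> ('a \<Rightarrow> real) \<Rightarrow> real" where
  "cov P X Z = (\<integral>\<omega>. (X \<omega> - (\<integral>x. X x \<partial>P)) * (Z \<omega> - (\<integral>x. Z x \<partial>P)) \<partial>P)"

definition gen_sigma :: "'a measure \<Rightarrow> ('i \<Rightarrow> 'a \<Rightarrow> real) \<Rightarrow> 'i set \<Rightarrow> 'a measure" where
  "gen_sigma P X I = sigma (space P)
     {X i -` A \<inter> space P | i A. i \<in> I \<and> A \<in> sets (borel :: real measure)}"

definition cond_indep_given :: "'a measure \<Rightarrow> 'a measure \<Rightarrow> ('i \<Rightarrow> 'a \<Rightarrow> real) \<Rightarrow> 'i set \<Rightarrow> bool" where
  "cond_indep_given P F Y I \<longleftrightarrow>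
    (\<forall>J (f :: 'i \<Rightarrow> real \<Rightarrow> real).
       finite J \<and> J \<subseteq> I \<and>
       (\<forall>i\<in>J. f i \<in> borel_measurable borel \<and> integrable P (\<lambda>\<omega>. f i (Y i \<omega>))) \<and>
       integrable P (\<lambda>\<omega>. \<Prod>i\<in>J. f i (Y i \<omega>)) \<longrightarrow>
       (AE \<omega> in P. real_cond_exp P F (\<lambda>\<omega>. \<Prod>i\<in>J. f i (Y i \<omega>)) \<omega>
                   = (\<Prod>i\<in>J. real_cond_exp P F (\<lambda>\<omega>. f i (Y i \<omega>)) \<omega>)))"

definition agree_on :: "nat \<Rightarrow> nat set \<Rightarrow> (nat \<Rightarrow> nat) \<Rightarrow> (nat \<Rightarrow> nat) \<Rightarrow> bool" where
  "agree_on m S i j \<longleftrightarrow> (\<forall>p\<in>{1..m}. (p \<in> S \<longleftrightarrow> i p = j p))"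

definition C_cov :: "'a measure \<Rightarrow> ((nat \<Rightarrow> nat) \<Rightarrow> 'a \<Rightarrow> real) \<Rightarrow> nat \<Rightarrow> (nat \<Rightarrow> nat)
    \<Rightarrow> nat set \<Rightarrow> real" where
  "C_cov P Y m n S = (if S = {} then 0 else
     (let ij = (SOME ij. fst ij \<in> multi_idx m n \<and> snd ij \<in> multi_idx m n \<and> agree_on m S (fst ij) (snd ij))
      in cov P (Y (fst ij)) (Y (snd ij))))"

definition v_mob :: "'a measure \<Rightarrow> ((nat \<Rightarrow> nat) \<Rightarrow> 'a \<Rightarrow> real) \<Rightarrow> nat \<Rightarrow> (nat \<Rightarrow> nat)
    \<Rightarrow> nat set \<Rightarrow> real" where
  "v_mob P Y m n S = (\<Sum>S'\<in>Pow S. (-1) ^ (card S - card S') * C_cov P Y m n S')"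

end

theory Submission
  imports Defs
begin

definition agreeB :: "nat set \<Rightarrow> (nat \<Rightarrow> nat) \<times> (nat \<Rightarrow> nat) \<Rightarrow> bool" where
  "agreeB X kk \<longleftrightarrow> (\<forall>p\<in>X. fst kk (p - 1) = snd kk (p - 1) \<and> fst kk p = snd kk p)"

lemma bond_tuples_out:
  assumes "k \<in> bond_tuples m r" "j \<notin> {1..<m}" shows "k j = 0"
proof -
  have "k j < bond m r j" using assms(1) unfolding bond_tuples_def by blast
  moreover have "bond m r j = 1" using assms(2) unfolding bond_def by auto
  ultimately show ?thesis by simp
qed

lemma bond_tuples_in:
  assumes "k \<in> bond_tuples m r" "j \<in> {1..<m}" shows "k j < r j"
proof -
  have "k j < bond m r j" using assms(1) unfolding bond_tuples_def by blast
  then show ?thesis using assms(2) unfolding bond_def by auto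
qed

definition cntA :: "nat \<Rightarrow> (nat \<Rightarrow> nat) \<Rightarrow> nat set \<Rightarrow> ((nat \<Rightarrow> nat) \<times> (nat \<Rightarrow> nat)) set" where
  "cntA m r X = {kk \<in> bond_tuples m r \<times> bond_tuples m r. agreeB X kk}"

definition cntB :: "nat \<Rightarrow> (nat \<Rightarrow> nat) \<Rightarrow> nat set \<Rightarrow> (nat \<Rightarrow> nat \<times> nat) set" where
  "cntB m r X = PiE {1..<m} (\<lambda>j. if j \<in> X \<or> Suc j \<in> X then (\<lambda>a. (a, a)) ` {..<r j} else {..<r j} \<times> {..<r j})"

definition phiB :: "nat \<Rightarrow> (nat \<Rightarrow> nat) \<times> (nat \<Rightarrow> nat) \<Rightarrow> nat \<Rightarrow> nat \<times> nat" where
  "phiB m kk = restrict (\<lambda>j. (fst kk j, snd kk j)) {1..<m}"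

definition psiB :: "nat \<Rightarrow> (nat \<Rightarrow> nat \<times> nat) \<Rightarrow> (nat \<Rightarrow> nat) \<times> (nat \<Rightarrow> nat)" where
  "psiB m f = (\<lambda>j. if j \<in> {1..<m} then fst (f j) else 0, \<lambda>j. if j \<in> {1..<m} then snd (f j) else 0)"

lemma count_bij:
  assumes X: "X \<subseteq> {1..m}"
  shows "bij_betw (phiB m) (cntA m r X) (cntB m r X)"
proof -
  have 1: "\<forall>a\<in>cntA m r X. psiB m (phiB m a) = a"
  proof
    fix a assume "a \<in> cntA m r X"
    then have a: "fst a \<in> bond_tuples m r" "snd a \<in> bond_tuples m r" unfolding cntA_def by auto
    show "psiB m (phiB m a) = a"
      using bond_tuples_out[OF a(1)] bond_tuples_out[OF a(2)]
      unfolding psiB_def phiB_def by (simp add: fun_eq_iff prod_eq_iff)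
  qed
  have 2: "\<forall>a\<in>cntB m r X. phiB m (psiB m a) = a"
  proof
    fix f assume f: "f \<in> cntB m r X"
    show "phiB m (psiB m f) = f"
    proof
      fix j show "phiB m (psiB m f) j = f j"
        using f unfolding cntB_def psiB_def phiB_def PiE_def extensional_def by auto
    qed
  qed
  have 3: "phiB m ` cntA m r X \<subseteq> cntB m r X"
  proof
    fix y assume "y \<in> phiB m ` cntA m r X"
    then obtain k k' where y: "y = phiB m (k, k')" and k: "k \<in> bond_tuples m r"
      and k': "k' \<in> bond_tuples m r" and ag: "agreeB X (k, k')"
      unfolding cntA_def by auto
    show "y \<in> cntB m r X" unfolding cntB_def y
    proof (rule PiE_I)
      fix j assume j: "j \<in> {1..<m}"
      have "j \<in> X \<or> Suc j \<in> X \<Longrightarrow> k j = k' j"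
        using ag unfolding agreeB_def by (metis diff_Suc_1 fst_conv snd_conv)
      then show "phiB m (k, k') j
         \<in> (if j \<in> X \<or> Suc j \<in> X then (\<lambda>a. (a, a)) ` {..<r j} else {..<r j} \<times> {..<r j})"
        using j bond_tuples_in[OF k j] bond_tuples_in[OF k' j] unfolding phiB_def by auto
    next
      fix j assume "j \<notin> {1..<m}" then show "phiB m (k, k') j = undefined"
        unfolding phiB_def by auto
    qed
  qed
  have 4: "psiB m ` cntB m r X \<subseteq> cntA m r X"
  proof
    fix y assume "y \<in> psiB m ` cntB m r X"
    then obtain f where y: "y = psiB m f" and f: "f \<in> cntB m r X" by auto
    have fj: "j \<in> {1..<m} \<Longrightarrow> fst (f j) < r j \<and> snd (f j) < r j \<and> ((j \<in> X \<or> Suc j \<in> X) \<longrightarrow> fst (f j) = snd (f j))" for j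
      using PiE_mem[OF f[unfolded cntB_def], of j] by (auto split: if_splits)
    have b1: "fst y \<in> bond_tuples m r" "snd y \<in> bond_tuples m r"
      using fj unfolding bond_tuples_def bond_def y psiB_def by auto
    have "agreeB X y"
      unfolding agreeB_def
    proof (intro ballI conjI)
      fix p assume p: "p \<in> X"
      then have p1: "p \<in> {1..m}" using X by auto
      show "fst y (p - 1) = snd y (p - 1)"
        using fj[of "p - 1"] p p1 unfolding y psiB_def by (cases "p - 1 \<in> {1..<m}") auto
      show "fst y p = snd y p"
        using fj[of p] p unfolding y psiB_def by (cases "p \<in> {1..<m}") auto
    qed
    then show "y \<in> cntA m r X" using b1 unfolding cntA_def by (simp add: mem_Times_iff)
  qed
  show ?thesis by (rule bij_betw_byWitness[OF 1 2 3 4])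
qed

lemma count_card:
  assumes X: "X \<subseteq> {1..m}"
  shows "card (cntA m r X) = (\<Prod>j\<in>{1..<m}. (if j \<in> X \<or> Suc j \<in> X then r j else (r j)\<^sup>2))"
    and "finite (cntA m r X)"
proof -
  have fin: "finite (cntB m r X)" unfolding cntB_def by (intro finite_PiE) auto
  have "card (cntA m r X) = card (cntB m r X)"
    using bij_betw_same_card[OF count_bij[OF X]] .
  also have "\<dots> = (\<Prod>j\<in>{1..<m}. card (if j \<in> X \<or> Suc j \<in> X then (\<lambda>a. (a, a)) ` {..<r j} else {..<r j} \<times> {..<r j}))"
    unfolding cntB_def by (rule card_PiE) auto
  also have "\<dots> = (\<Prod>j\<in>{1..<m}. (if j \<in> X \<or> Suc j \<in> X then r j else (r j)\<^sup>2))"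
  proof (intro prod.cong refl)
    fix j
    have "card ((\<lambda>a. (a, a)) ` {..<r j}) = r j" by (subst card_image) (auto simp: inj_on_def)
    then show "card (if j \<in> X \<or> Suc j \<in> X then (\<lambda>a. (a, a)) ` {..<r j} else {..<r j} \<times> {..<r j}) =
      (if j \<in> X \<or> Suc j \<in> X then r j else (r j)\<^sup>2)"
      by (simp add: card_cartesian_product power2_eq_square)
  qed
  finally show "card (cntA m r X) = (\<Prod>j\<in>{1..<m}. (if j \<in> X \<or> Suc j \<in> X then r j else (r j)\<^sup>2))" .
  show "finite (cntA m r X)"
    using bij_betw_finite[OF count_bij[OF X]] fin by blast
qed

lemma zero_bt: "(\<lambda>_. 0) \<in> bond_tuples m r" if "\<And>k. k \<in> {1..<m} \<Longrightarrow> r k \<ge> 1"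
proof -
  have "\<forall>j. (0::nat) < bond m r j" unfolding bond_def using that by (simp add: Suc_le_eq)
  then show ?thesis unfolding bond_tuples_def mem_Collect_eq by simp
qed

lemma finite_bt:
  assumes "\<And>k. k \<in> {1..<m} \<Longrightarrow> r k \<ge> 1"
  shows "finite (bond_tuples m r)"
proof -
  have "cntA m r {} = bond_tuples m r \<times> bond_tuples m r"
    unfolding cntA_def agreeB_def by simp
  then have "finite (bond_tuples m r \<times> bond_tuples m r)"
    using count_card(2)[of "{}" m r] by simp
  moreover have "bond_tuples m r \<noteq> {}" using zero_bt[of m r] assms by blast
  ultimately show ?thesis by (rule finite_cartesian_productD1)
qed


definition Wt :: "nat \<Rightarrow> (nat \<Rightarrow> nat) \<Rightarrow> (nat \<Rightarrow> real) \<Rightarrow> (nat \<Rightarrow> real) \<Rightarrow> nat set \<Rightarrow> real" where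
  "Wt m r \<mu> \<sigma> T = (\<Prod>p\<in>{1..m}. if p \<in> T then (\<sigma> p)\<^sup>2 else (\<mu> p)\<^sup>2) *
      (\<Prod>j\<in>{1..<m}. real (if j \<in> T \<or> Suc j \<in> T then r j else (r j)\<^sup>2))"

lemma expand_one:
  fixes \<mu> \<sigma> :: "nat \<Rightarrow> real"
  assumes S: "S \<subseteq> {1..m}"
  shows "(\<Prod>p\<in>{1..m}. (\<mu> p)\<^sup>2 + (if p \<in> S \<and> fst kk (p - 1) = snd kk (p - 1) \<and> fst kk p = snd kk p then (\<sigma> p)\<^sup>2 else 0))
         - (\<Prod>p\<in>{1..m}. (\<mu> p)\<^sup>2)
       = (\<Sum>X\<in>Pow {1..m} - {{}}. if X \<subseteq> S \<and> agreeB X kk then (\<Prod>p\<in>{1..m}. if p \<in> X then (\<sigma> p)\<^sup>2 else (\<mu> p)\<^sup>2) else 0)"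
proof -
  define s where "s p = (if p \<in> S \<and> fst kk (p - 1) = snd kk (p - 1) \<and> fst kk p = snd kk p then (\<sigma> p)\<^sup>2 else 0)" for p
  have "(\<Prod>p\<in>{1..m}. (\<mu> p)\<^sup>2 + s p) = (\<Prod>p\<in>{1..m}. s p + (\<mu> p)\<^sup>2)" by (simp add: add.commute)
  also have "\<dots> = (\<Sum>X\<in>Pow {1..m}. (\<Prod>p\<in>X. s p) * (\<Prod>p\<in>{1..m} - X. (\<mu> p)\<^sup>2))"
    by (rule prod_add) simp
  also have "\<dots> = (\<Prod>p\<in>{1..m}. (\<mu> p)\<^sup>2) + (\<Sum>X\<in>Pow {1..m} - {{}}. (\<Prod>p\<in>X. s p) * (\<Prod>p\<in>{1..m} - X. (\<mu> p)\<^sup>2))"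
    by (subst sum.remove[of _ "{}"]) auto
  finally have 1: "(\<Prod>p\<in>{1..m}. (\<mu> p)\<^sup>2 + s p) - (\<Prod>p\<in>{1..m}. (\<mu> p)\<^sup>2)
      = (\<Sum>X\<in>Pow {1..m} - {{}}. (\<Prod>p\<in>X. s p) * (\<Prod>p\<in>{1..m} - X. (\<mu> p)\<^sup>2))" by simp
  have 2: "(\<Prod>p\<in>X. s p) * (\<Prod>p\<in>{1..m} - X. (\<mu> p)\<^sup>2)
     = (if X \<subseteq> S \<and> agreeB X kk then (\<Prod>p\<in>{1..m}. if p \<in> X then (\<sigma> p)\<^sup>2 else (\<mu> p)\<^sup>2) else 0)"
    if X: "X \<in> Pow {1..m} - {{}}" for X
  proof -
    have finX: "finite X" using X finite_subset[of X "{1..m}"] by auto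
    show ?thesis
    proof (cases "X \<subseteq> S \<and> agreeB X kk")
      case True
      have "(\<Prod>p\<in>X. s p) = (\<Prod>p\<in>X. (\<sigma> p)\<^sup>2)"
        using True unfolding s_def agreeB_def by (intro prod.cong) auto
      moreover have "(\<Prod>p\<in>{1..m}. if p \<in> X then (\<sigma> p)\<^sup>2 else (\<mu> p)\<^sup>2)
          = (\<Prod>p\<in>X. (\<sigma> p)\<^sup>2) * (\<Prod>p\<in>{1..m} - X. (\<mu> p)\<^sup>2)"
      proof -
        have "{1..m} \<inter> {p. p \<in> X} = X" "{1..m} \<inter> - {p. p \<in> X} = {1..m} - X" using X by auto
        then show ?thesis by (simp add: prod.If_cases)
      qed
      ultimately show ?thesis using True by simp
    next
      case False
      then obtain p where "p \<in> X" "\<not> (p \<in> S \<and> fst kk (p - 1) = snd kk (p - 1) \<and> fst kk p = snd kk p)"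
        unfolding agreeB_def by blast
      then have "p \<in> X" "s p = 0" unfolding s_def by auto
      then have "(\<Prod>p\<in>X. s p) = 0" using finX by (intro prod_zero) auto
      then show ?thesis using False by (simp only: if_False mult_zero_left)
    qed
  qed
  have 3: "(\<Sum>X\<in>Pow {1..m} - {{}}. (\<Prod>p\<in>X. s p) * (\<Prod>p\<in>{1..m} - X. (\<mu> p)\<^sup>2))
     = (\<Sum>X\<in>Pow {1..m} - {{}}. if X \<subseteq> S \<and> agreeB X kk then (\<Prod>p\<in>{1..m}. if p \<in> X then (\<sigma> p)\<^sup>2 else (\<mu> p)\<^sup>2) else 0)"
    by (rule sum.cong[OF refl 2])
  show ?thesis using trans[OF 1 3] unfolding s_def .
qed

lemma comb_sum:
  fixes \<mu> \<sigma> :: "nat \<Rightarrow> real"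
  assumes S: "S \<subseteq> {1..m}" and r_pos: "\<And>k. k \<in> {1..<m} \<Longrightarrow> r k \<ge> 1"
  shows "(\<Sum>kk\<in>bond_tuples m r \<times> bond_tuples m r.
           (\<Prod>p\<in>{1..m}. (\<mu> p)\<^sup>2 + (if p \<in> S \<and> fst kk (p - 1) = snd kk (p - 1) \<and> fst kk p = snd kk p then (\<sigma> p)\<^sup>2 else 0))
           - (\<Prod>p\<in>{1..m}. (\<mu> p)\<^sup>2))
       = (\<Sum>T\<in>Pow S - {{}}. Wt m r \<mu> \<sigma> T)"
proof -
  define BB where "BB = bond_tuples m r \<times> bond_tuples m r"
  define g where "g X = (\<Prod>p\<in>{1..m}. if p \<in> X then (\<sigma> p)\<^sup>2 else (\<mu> p)\<^sup>2)" for X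
  have finBB: "finite BB" unfolding BB_def using finite_bt[OF r_pos] by auto
  have "(\<Sum>kk\<in>BB. (\<Prod>p\<in>{1..m}. (\<mu> p)\<^sup>2 + (if p \<in> S \<and> fst kk (p - 1) = snd kk (p - 1) \<and> fst kk p = snd kk p then (\<sigma> p)\<^sup>2 else 0))
           - (\<Prod>p\<in>{1..m}. (\<mu> p)\<^sup>2))
     = (\<Sum>kk\<in>BB. \<Sum>X\<in>Pow {1..m} - {{}}. if X \<subseteq> S \<and> agreeB X kk then g X else 0)"
    unfolding g_def by (rule sum.cong[OF refl expand_one[OF S]])
  also have "\<dots> = (\<Sum>X\<in>Pow {1..m} - {{}}. \<Sum>kk\<in>BB. if X \<subseteq> S \<and> agreeB X kk then g X else 0)"
    by (rule sum.swap)
  also have "\<dots> = (\<Sum>X\<in>Pow {1..m} - {{}}. if X \<subseteq> S then Wt m r \<mu> \<sigma> X else 0)"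
  proof (rule sum.cong[OF refl])
    fix X assume X: "X \<in> Pow {1..m} - {{}}"
    show "(\<Sum>kk\<in>BB. if X \<subseteq> S \<and> agreeB X kk then g X else 0) = (if X \<subseteq> S then Wt m r \<mu> \<sigma> X else 0)"
    proof (cases "X \<subseteq> S")
      case True
      have "(\<Sum>kk\<in>BB. if X \<subseteq> S \<and> agreeB X kk then g X else 0) = (\<Sum>kk\<in>BB. if agreeB X kk then g X else 0)"
        using True by simp
      also have "\<dots> = (\<Sum>kk\<in>{kk\<in>BB. agreeB X kk}. g X)"
        by (rule sum.inter_filter[OF finBB, symmetric])
      also have "\<dots> = real (card (cntA m r X)) * g X"
        unfolding cntA_def BB_def by simp
      also have "\<dots> = Wt m r \<mu> \<sigma> X"
        unfolding count_card(1)[OF subset_trans[OF True S]] Wt_def g_def of_nat_prod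
        by (simp add: mult.commute)
      finally show ?thesis using True by simp
    qed simp
  qed
  also have "\<dots> = (\<Sum>X\<in>{X \<in> Pow {1..m} - {{}}. X \<subseteq> S}. Wt m r \<mu> \<sigma> X)"
    by (rule sum.inter_filter[symmetric]) simp
  also have "{X \<in> Pow {1..m} - {{}}. X \<subseteq> S} = Pow S - {{}}" using S by auto
  finally show ?thesis unfolding BB_def .
qed


lemma mob_single:
  fixes C W :: "nat set \<Rightarrow> real"
  assumes "\<And>S'. S' \<subseteq> {a} \<Longrightarrow> C S' = (\<Sum>T\<in>Pow S' - {{}}. W T)"
  shows "(\<Sum>S'\<in>Pow {a}. (-1) ^ (card {a} - card S') * C S') = W {a}"
proof -
  have "Pow {a} = {{}, {a}}" by (auto simp: Pow_singleton_iff)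
  then show ?thesis using assms[of "{}"] assms[of "{a}"] by simp
qed

lemma mob_pair:
  fixes C W :: "nat set \<Rightarrow> real"
  assumes ab: "a \<noteq> b" and h: "\<And>S'. S' \<subseteq> {a, b} \<Longrightarrow> C S' = (\<Sum>T\<in>Pow S' - {{}}. W T)"
  shows "(\<Sum>S'\<in>Pow {a, b}. (-1) ^ (card {a, b} - card S') * C S') = W {a, b}"
proof -
  have P: "Pow {a, b} = {{}, {a}, {b}, {a, b}}" by (auto simp: Pow_insert)
  have Pa: "Pow {a} - {{}} = {{a}}" "Pow {b} - {{}} = {{b}}" by auto
  have Pab: "Pow {a, b} - {{}} = {{a}, {b}, {a, b}}" using P by auto
  have C0: "C {} = 0" using h[of "{}"] by simp
  have Ca: "C {a} = W {a}" using h[of "{a}"] Pa by simp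
  have Cb: "C {b} = W {b}" using h[of "{b}"] Pa by simp
  have Cab: "C {a, b} = W {a} + W {b} + W {a, b}" using h[of "{a, b}"] Pab ab
    by (simp add: doubleton_eq_iff)
  show ?thesis unfolding P using ab C0 Ca Cb Cab by (simp add: doubleton_eq_iff)
qed

lemma Wt_split: "Wt m r \<mu> \<sigma> T = (\<Prod>p\<in>{1..m}. if p \<in> T then (\<sigma> p)\<^sup>2 else (\<mu> p)\<^sup>2) *
      (\<Prod>j\<in>{1..<m}. real (if j \<in> T \<or> Suc j \<in> T then r j else (r j)\<^sup>2))"
  by (simp add: Wt_def)

lemma Wt_nz:
  assumes "\<And>p. p \<in> {1..m} \<Longrightarrow> \<mu> p \<noteq> 0" "\<And>p. p \<in> {1..m} \<Longrightarrow> \<sigma> p \<noteq> 0"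
    "\<And>k. k \<in> {1..<m} \<Longrightarrow> r k \<ge> 1"
  shows "Wt m r \<mu> \<sigma> T \<noteq> 0"
  unfolding Wt_def using assms by (auto simp: prod_zero_iff Suc_le_eq)

lemma ratio_gen:
  fixes A B C D :: "nat set"
  assumes mu: "\<And>p. p \<in> {1..m} \<Longrightarrow> \<mu> p \<noteq> 0" and sg: "\<And>p. p \<in> {1..m} \<Longrightarrow> \<sigma> p \<noteq> 0"
    and r_pos: "\<And>k. k \<in> {1..<m} \<Longrightarrow> r k \<ge> 1"
    and q: "q \<in> {1..<m}"
    and g: "\<And>p. p \<in> {1..m} \<Longrightarrow> (p \<in> A \<and> p \<in> B \<longleftrightarrow> p \<in> C \<and> p \<in> D) \<and> (p \<in> A \<or> p \<in> B \<longleftrightarrow> p \<in> C \<or> p \<in> D)"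
    and f: "\<And>j. j \<in> {1..<m} \<Longrightarrow>
       real (if j \<in> A \<or> Suc j \<in> A then r j else (r j)\<^sup>2) * real (if j \<in> B \<or> Suc j \<in> B then r j else (r j)\<^sup>2)
       = (if j = q then real (r q) else 1) *
         (real (if j \<in> C \<or> Suc j \<in> C then r j else (r j)\<^sup>2) * real (if j \<in> D \<or> Suc j \<in> D then r j else (r j)\<^sup>2))"
  shows "real (r q) = Wt m r \<mu> \<sigma> A * Wt m r \<mu> \<sigma> B / (Wt m r \<mu> \<sigma> C * Wt m r \<mu> \<sigma> D)"
proof -
  have G: "(\<Prod>p\<in>{1..m}. if p \<in> A then (\<sigma> p)\<^sup>2 else (\<mu> p)\<^sup>2) * (\<Prod>p\<in>{1..m}. if p \<in> B then (\<sigma> p)\<^sup>2 else (\<mu> p)\<^sup>2)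
     = (\<Prod>p\<in>{1..m}. if p \<in> C then (\<sigma> p)\<^sup>2 else (\<mu> p)\<^sup>2) * (\<Prod>p\<in>{1..m}. if p \<in> D then (\<sigma> p)\<^sup>2 else (\<mu> p)\<^sup>2)"
    unfolding prod.distrib[symmetric]
  proof (rule prod.cong[OF refl])
    fix p assume p: "p \<in> {1..m}"
    show "(if p \<in> A then (\<sigma> p)\<^sup>2 else (\<mu> p)\<^sup>2) * (if p \<in> B then (\<sigma> p)\<^sup>2 else (\<mu> p)\<^sup>2) =
          (if p \<in> C then (\<sigma> p)\<^sup>2 else (\<mu> p)\<^sup>2) * (if p \<in> D then (\<sigma> p)\<^sup>2 else (\<mu> p)\<^sup>2)"
      using g[OF p] by (auto split: if_splits simp: mult.commute)
  qed
  have R: "(\<Prod>j\<in>{1..<m}. real (if j \<in> A \<or> Suc j \<in> A then r j else (r j)\<^sup>2)) *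
           (\<Prod>j\<in>{1..<m}. real (if j \<in> B \<or> Suc j \<in> B then r j else (r j)\<^sup>2))
     = real (r q) * ((\<Prod>j\<in>{1..<m}. real (if j \<in> C \<or> Suc j \<in> C then r j else (r j)\<^sup>2)) *
           (\<Prod>j\<in>{1..<m}. real (if j \<in> D \<or> Suc j \<in> D then r j else (r j)\<^sup>2)))"
  proof -
    have "(\<Prod>j\<in>{1..<m}. real (if j \<in> A \<or> Suc j \<in> A then r j else (r j)\<^sup>2)) *
           (\<Prod>j\<in>{1..<m}. real (if j \<in> B \<or> Suc j \<in> B then r j else (r j)\<^sup>2))
        = (\<Prod>j\<in>{1..<m}. (if j = q then real (r q) else 1) *
         (real (if j \<in> C \<or> Suc j \<in> C then r j else (r j)\<^sup>2) * real (if j \<in> D \<or> Suc j \<in> D then r j else (r j)\<^sup>2)))"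
      unfolding prod.distrib[symmetric] by (rule prod.cong[OF refl f])
    also have "\<dots> = (\<Prod>j\<in>{1..<m}. (if j = q then real (r q) else 1)) *
        ((\<Prod>j\<in>{1..<m}. real (if j \<in> C \<or> Suc j \<in> C then r j else (r j)\<^sup>2)) *
           (\<Prod>j\<in>{1..<m}. real (if j \<in> D \<or> Suc j \<in> D then r j else (r j)\<^sup>2)))"
      by (simp only: prod.distrib)
    also have "(\<Prod>j\<in>{1..<m}. (if j = q then real (r q) else 1)) = real (r q)"
      using q by (simp add: prod.delta)
    finally show ?thesis .
  qed
  have "Wt m r \<mu> \<sigma> A * Wt m r \<mu> \<sigma> B = real (r q) * (Wt m r \<mu> \<sigma> C * Wt m r \<mu> \<sigma> D)"
    unfolding Wt_def using G R by (simp add: algebra_simps)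
  moreover have "Wt m r \<mu> \<sigma> C * Wt m r \<mu> \<sigma> D \<noteq> 0" using Wt_nz[OF mu sg r_pos] by simp
  ultimately show ?thesis by (simp add: field_simps)
qed

lemma ratio1:
  assumes mu: "\<And>p. p \<in> {1..m} \<Longrightarrow> \<mu> p \<noteq> 0" and sg: "\<And>p. p \<in> {1..m} \<Longrightarrow> \<sigma> p \<noteq> 0"
    and r_pos: "\<And>k. k \<in> {1..<m} \<Longrightarrow> r k \<ge> 1" and m: "3 \<le> m"
  shows "real (r 1) = Wt m r \<mu> \<sigma> {1, 2} * Wt m r \<mu> \<sigma> {3} / (Wt m r \<mu> \<sigma> {2} * Wt m r \<mu> \<sigma> {1, 3})"
proof (rule ratio_gen[OF mu sg r_pos])
  show "1 \<in> {1..<m}" using m by simp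
  fix p :: nat show "(p \<in> {1, 2} \<and> p \<in> {3} \<longleftrightarrow> p \<in> {2} \<and> p \<in> {1, 3}) \<and> (p \<in> {1, 2} \<or> p \<in> {3} \<longleftrightarrow> p \<in> {2} \<or> p \<in> {1, 3})" by auto
next
  fix j assume j: "j \<in> {1..<m}"
  consider "j = 1" | "j = 2" | "j = 3" | "j \<ge> 4" using j by force
  then show "real (if j \<in> {1, 2} \<or> Suc j \<in> {1, 2} then r j else (r j)\<^sup>2) * real (if j \<in> {3} \<or> Suc j \<in> {3} then r j else (r j)\<^sup>2)
       = (if j = 1 then real (r 1) else 1) *
         (real (if j \<in> {2} \<or> Suc j \<in> {2} then r j else (r j)\<^sup>2) * real (if j \<in> {1, 3} \<or> Suc j \<in> {1, 3} then r j else (r j)\<^sup>2))"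
    by cases (simp_all add: power2_eq_square)
qed

lemma ratio2:
  assumes mu: "\<And>p. p \<in> {1..m} \<Longrightarrow> \<mu> p \<noteq> 0" and sg: "\<And>p. p \<in> {1..m} \<Longrightarrow> \<sigma> p \<noteq> 0"
    and r_pos: "\<And>k. k \<in> {1..<m} \<Longrightarrow> r k \<ge> 1" and m: "4 \<le> m"
  shows "real (r (m - 1)) = Wt m r \<mu> \<sigma> {m - 1, m} * Wt m r \<mu> \<sigma> {m - 3}
          / (Wt m r \<mu> \<sigma> {m} * Wt m r \<mu> \<sigma> {m - 3, m - 1})"
proof (rule ratio_gen[OF mu sg r_pos])
  show "m - 1 \<in> {1..<m}" using m by simp
  fix p :: nat show "(p \<in> {m - 1, m} \<and> p \<in> {m - 3} \<longleftrightarrow> p \<in> {m} \<and> p \<in> {m - 3, m - 1}) \<and> (p \<in> {m - 1, m} \<or> p \<in> {m - 3} \<longleftrightarrow> p \<in> {m} \<or> p \<in> {m - 3, m - 1})"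
    using m by auto
next
  fix j assume j: "j \<in> {1..<m}"
  obtain k where mk: "m = k + 4" using m by (metis add.commute le_Suc_ex)
  have j': "1 \<le> j" "j < k + 4" using j mk by auto
  consider "j = k + 3" | "j = k + 2" | "j = k + 1" | "j = k" | "j < k" using j' by linarith
  then show "real (if j \<in> {m - 1, m} \<or> Suc j \<in> {m - 1, m} then r j else (r j)\<^sup>2) * real (if j \<in> {m - 3} \<or> Suc j \<in> {m - 3} then r j else (r j)\<^sup>2)
       = (if j = m - 1 then real (r (m - 1)) else 1) *
         (real (if j \<in> {m} \<or> Suc j \<in> {m} then r j else (r j)\<^sup>2) * real (if j \<in> {m - 3, m - 1} \<or> Suc j \<in> {m - 3, m - 1} then r j else (r j)\<^sup>2))"
    unfolding mk by cases (simp_all add: power2_eq_square add.commute)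
qed


lemma regroup:
  fixes e e' :: "nat \<Rightarrow> 'x" and \<kappa> :: "'x \<Rightarrow> nat" and h :: "'x \<Rightarrow> nat \<Rightarrow> 'b::comm_monoid_mult"
  assumes A: "finite A" and k: "\<And>p. p \<in> A \<Longrightarrow> \<kappa> (e p) = p \<and> \<kappa> (e' p) = p"
  shows "(\<Prod>x\<in>e ` A \<union> e' ` A. h x (if e (\<kappa> x) = e' (\<kappa> x) then 2 else 1))
       = (\<Prod>p\<in>A. if e p = e' p then h (e p) 2 else h (e p) 1 * h (e' p) 1)"
proof -
  have U: "e ` A \<union> e' ` A = (\<Union>p\<in>A. {e p, e' p})" by auto
  have "(\<Prod>x\<in>e ` A \<union> e' ` A. h x (if e (\<kappa> x) = e' (\<kappa> x) then 2 else 1))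
      = (\<Prod>p\<in>A. \<Prod>x\<in>{e p, e' p}. h x (if e (\<kappa> x) = e' (\<kappa> x) then 2 else 1))"
    unfolding U
  proof (rule prod.UNION_disjoint)
    show "finite A" by (rule A)
    show "\<forall>p\<in>A. finite {e p, e' p}" by simp
    show "\<forall>p\<in>A. \<forall>q\<in>A. p \<noteq> q \<longrightarrow> {e p, e' p} \<inter> {e q, e' q} = {}"
    proof (intro ballI impI)
      fix p q assume p: "p \<in> A" and q: "q \<in> A" and pq: "p \<noteq> q"
      have 1: "\<kappa> x = p" if "x \<in> {e p, e' p}" for x using that k[OF p] by auto
      have 2: "\<kappa> x = q" if "x \<in> {e q, e' q}" for x using that k[OF q] by auto
      show "{e p, e' p} \<inter> {e q, e' q} = {}"
      proof (rule ccontr)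
        assume "{e p, e' p} \<inter> {e q, e' q} \<noteq> {}"
        then obtain x where "x \<in> {e p, e' p}" "x \<in> {e q, e' q}" by blast
        then show False using 1 2 pq by metis
      qed
    qed
  qed
  also have "\<dots> = (\<Prod>p\<in>A. if e p = e' p then h (e p) 2 else h (e p) 1 * h (e' p) 1)"
  proof (rule prod.cong[OF refl])
    fix p assume p: "p \<in> A"
    show "(\<Prod>x\<in>{e p, e' p}. h x (if e (\<kappa> x) = e' (\<kappa> x) then 2 else 1)) =
          (if e p = e' p then h (e p) 2 else h (e p) 1 * h (e' p) 1)"
      using k[OF p] by auto
  qed
  finally show ?thesis .
qed

definition thv :: "(nat \<Rightarrow> nat \<Rightarrow> nat \<Rightarrow> nat \<Rightarrow> 'a \<Rightarrow> real) \<Rightarrow> nat \<times> nat \<times> nat \<times> nat \<Rightarrow> 'a \<Rightarrow> real" where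
  "thv \<theta> e \<omega> = \<theta> (fst e) (fst (snd e)) (fst (snd (snd e))) (snd (snd (snd e))) \<omega>"

definition ek :: "(nat \<Rightarrow> nat) \<Rightarrow> (nat \<Rightarrow> nat) \<Rightarrow> nat \<Rightarrow> nat \<times> nat \<times> nat \<times> nat" where
  "ek i k p = (p, k (p - 1), i p, k p)"

locale ttp =
  fixes P :: "'a measure" and m :: nat and n r :: "nat \<Rightarrow> nat"
    and \<theta> :: "nat \<Rightarrow> nat \<Rightarrow> nat \<Rightarrow> nat \<Rightarrow> 'a \<Rightarrow> real"
    and \<mu> \<sigma> :: "nat \<Rightarrow> real"
  assumes probP: "prob_space P"
    and n_ge: "\<And>p. p \<in> {1..m} \<Longrightarrow> n p \<ge> 2"
    and r_pos: "\<And>k. k \<in> {1..<m} \<Longrightarrow> r k \<ge> 1"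
    and \<theta>_meas: "\<And>e. e \<in> core_entries m n r \<Longrightarrow>
        (\<lambda>\<omega>. \<theta> (fst e) (fst (snd e)) (fst (snd (snd e))) (snd (snd (snd e))) \<omega>) \<in> borel_measurable P"
    and \<theta>_indep: "prob_space.indep_vars P (\<lambda>_. borel)
        (\<lambda>e \<omega>. \<theta> (fst e) (fst (snd e)) (fst (snd (snd e))) (snd (snd (snd e))) \<omega>) (core_entries m n r)"
    and \<theta>_sq: "\<And>p a i b. (p, a, i, b) \<in> core_entries m n r \<Longrightarrow>
        integrable P (\<lambda>\<omega>. (\<theta> p a i b \<omega>)\<^sup>2)"
    and \<theta>_mean: "\<And>p a i b. (p, a, i, b) \<in> core_entries m n r \<Longrightarrow>
        (\<integral>\<omega>. \<theta> p a i b \<omega> \<partial>P) = \<mu> p"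
    and \<theta>_var: "\<And>p a i b. (p, a, i, b) \<in> core_entries m n r \<Longrightarrow>
        (\<integral>\<omega>. (\<theta> p a i b \<omega> - \<mu> p)\<^sup>2 \<partial>P) = (\<sigma> p)\<^sup>2"
begin

sublocale prob_space P by (rule probP)

lemma thv_eq: "thv \<theta> e = (\<lambda>\<omega>. \<theta> (fst e) (fst (snd e)) (fst (snd (snd e))) (snd (snd (snd e))) \<omega>)"
  by (simp add: fun_eq_iff thv_def)

lemma th_meas: "e \<in> core_entries m n r \<Longrightarrow> thv \<theta> e \<in> borel_measurable P"
  unfolding thv_eq by (rule \<theta>_meas)

lemma th_sq: "e \<in> core_entries m n r \<Longrightarrow> integrable P (\<lambda>\<omega>. (thv \<theta> e \<omega>)\<^sup>2)"
  using \<theta>_sq[of "fst e" "fst (snd e)" "fst (snd (snd e))" "snd (snd (snd e))"] by (simp add: thv_def)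

lemma th_int: "e \<in> core_entries m n r \<Longrightarrow> integrable P (thv \<theta> e)"
  by (rule square_integrable_imp_integrable[OF th_meas th_sq])

lemma th_mom1: "e \<in> core_entries m n r \<Longrightarrow> (\<integral>\<omega>. thv \<theta> e \<omega> \<partial>P) = \<mu> (fst e)"
  using \<theta>_mean[of "fst e" "fst (snd e)" "fst (snd (snd e))" "snd (snd (snd e))"] by (simp add: thv_def)

lemma th_mom2: "e \<in> core_entries m n r \<Longrightarrow> (\<integral>\<omega>. (thv \<theta> e \<omega>)\<^sup>2 \<partial>P) = (\<mu> (fst e))\<^sup>2 + (\<sigma> (fst e))\<^sup>2"
proof -
  assume e: "e \<in> core_entries m n r"
  let ?x = "thv \<theta> e" and ?c = "\<mu> (fst e)"
  have v: "(\<integral>\<omega>. (?x \<omega> - ?c)\<^sup>2 \<partial>P) = (\<sigma> (fst e))\<^sup>2"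
    using \<theta>_var[of "fst e" "fst (snd e)" "fst (snd (snd e))" "snd (snd (snd e))"] e by (simp add: thv_def)
  have eq: "(\<lambda>\<omega>. (?x \<omega> - ?c)\<^sup>2) = (\<lambda>\<omega>. (?x \<omega>)\<^sup>2 - (2 * ?c * ?x \<omega> - ?c\<^sup>2))"
    by (simp add: fun_eq_iff power2_eq_square algebra_simps)
  have i1: "integrable P (\<lambda>\<omega>. (?x \<omega>)\<^sup>2)" using th_sq[OF e] .
  have i2: "integrable P (\<lambda>\<omega>. 2 * ?c * ?x \<omega> - ?c\<^sup>2)"
    using th_int[OF e] by (intro Bochner_Integration.integrable_diff) auto
  have "(\<integral>\<omega>. (?x \<omega> - ?c)\<^sup>2 \<partial>P) = (\<integral>\<omega>. (?x \<omega>)\<^sup>2 \<partial>P) - (\<integral>\<omega>. 2 * ?c * ?x \<omega> - ?c\<^sup>2 \<partial>P)"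
    unfolding eq by (rule Bochner_Integration.integral_diff[OF i1 i2])
  also have "(\<integral>\<omega>. 2 * ?c * ?x \<omega> - ?c\<^sup>2 \<partial>P) = 2 * ?c * ?c - ?c\<^sup>2"
    using th_int[OF e] th_mom1[OF e] by (subst Bochner_Integration.integral_diff) (auto simp: prob_space)
  finally show ?thesis using v by (simp add: power2_eq_square)
qed

lemma th_indep: "indep_vars (\<lambda>_. borel) (thv \<theta>) (core_entries m n r)"
proof -
  have "thv \<theta> = (\<lambda>e \<omega>. \<theta> (fst e) (fst (snd e)) (fst (snd (snd e))) (snd (snd (snd e))) \<omega>)"
    by (simp add: fun_eq_iff thv_def)
  then show ?thesis using \<theta>_indep by simp
qed

lemma prod_moment:
  assumes E: "finite E" "E \<subseteq> core_entries m n r" and mlt: "\<And>e. e \<in> E \<Longrightarrow> mlt e \<in> {1, 2}"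
  shows "integrable P (\<lambda>\<omega>. \<Prod>e\<in>E. (thv \<theta> e \<omega>) ^ mlt e)"
    and "(\<integral>\<omega>. (\<Prod>e\<in>E. (thv \<theta> e \<omega>) ^ mlt e) \<partial>P) = (\<Prod>e\<in>E. \<integral>\<omega>. (thv \<theta> e \<omega>) ^ mlt e \<partial>P)"
proof -
  have ind: "indep_vars (\<lambda>_. borel) (\<lambda>e \<omega>. (thv \<theta> e \<omega>) ^ mlt e) E"
    by (rule indep_vars_compose2[OF indep_vars_subset[OF th_indep E(2)], where Y = "\<lambda>e x. x ^ mlt e"]) measurable
  have int: "integrable P (\<lambda>\<omega>. (thv \<theta> e \<omega>) ^ mlt e)" if e: "e \<in> E" for e
  proof -
    have ce: "e \<in> core_entries m n r" using e E by auto
    show ?thesis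
    proof (cases "mlt e = 1")
      case True then show ?thesis using th_int[OF ce] by simp
    next
      case False then have "mlt e = 2" using mlt[OF e] by auto
      then show ?thesis using th_sq[OF ce] by simp
    qed
  qed
  show "integrable P (\<lambda>\<omega>. \<Prod>e\<in>E. (thv \<theta> e \<omega>) ^ mlt e)"
    by (rule indep_vars_integrable[OF E(1) ind int])
  show "(\<integral>\<omega>. (\<Prod>e\<in>E. (thv \<theta> e \<omega>) ^ mlt e) \<partial>P) = (\<Prod>e\<in>E. \<integral>\<omega>. (thv \<theta> e \<omega>) ^ mlt e \<partial>P)"
    by (rule indep_vars_lebesgue_integral[OF E(1) ind int])
qed

end


context ttp begin

lemma mi_lt: "i \<in> multi_idx m n \<Longrightarrow> p \<in> {1..m} \<Longrightarrow> i p < n p"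
proof -
  assume i: "i \<in> multi_idx m n" and p: "p \<in> {1..m}"
  have "\<forall>p. i p < (if p \<in> {1..m} then n p else 1)" using i unfolding multi_idx_def by blast
  then have "i p < (if p \<in> {1..m} then n p else 1)" by (rule spec)
  then show ?thesis using p by simp
qed

lemma bt_lt: "k \<in> bond_tuples m r \<Longrightarrow> k j < bond m r j"
  unfolding bond_tuples_def by blast

lemma ek_in: "i \<in> multi_idx m n \<Longrightarrow> k \<in> bond_tuples m r \<Longrightarrow> p \<in> {1..m} \<Longrightarrow> ek i k p \<in> core_entries m n r"
  unfolding ek_def core_entries_def using mi_lt bt_lt by blast

lemma eta_eq: "tt_eta m r \<theta> i \<omega> = (\<Sum>k\<in>bond_tuples m r. \<Prod>p\<in>{1..m}. thv \<theta> (ek i k p) \<omega>)"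
  unfolding tt_eta_def thv_def ek_def by simp

lemma eta_eq': "tt_eta m r \<theta> i = (\<lambda>\<omega>. \<Sum>k\<in>bond_tuples m r. \<Prod>p\<in>{1..m}. thv \<theta> (ek i k p) \<omega>)"
  using eta_eq by (simp add: fun_eq_iff)

lemma term1:
  assumes i: "i \<in> multi_idx m n" and k: "k \<in> bond_tuples m r"
  shows "integrable P (\<lambda>\<omega>. \<Prod>p\<in>{1..m}. thv \<theta> (ek i k p) \<omega>)"
    and "(\<integral>\<omega>. (\<Prod>p\<in>{1..m}. thv \<theta> (ek i k p) \<omega>) \<partial>P) = (\<Prod>p\<in>{1..m}. \<mu> p)"
proof -
  have inj: "inj_on (ek i k) {1..m}" unfolding inj_on_def ek_def by auto
  have E: "finite (ek i k ` {1..m})" "ek i k ` {1..m} \<subseteq> core_entries m n r" using ek_in[OF i k] by auto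
  have re: "(\<Prod>p\<in>{1..m}. thv \<theta> (ek i k p) \<omega>) = (\<Prod>e\<in>ek i k ` {1..m}. (thv \<theta> e \<omega>) ^ (\<lambda>_. 1) e)" for \<omega>
    by (subst prod.reindex[OF inj]) (simp add: comp_def)
  show "integrable P (\<lambda>\<omega>. \<Prod>p\<in>{1..m}. thv \<theta> (ek i k p) \<omega>)"
    unfolding re by (rule prod_moment(1)[OF E]) simp
  have "(\<integral>\<omega>. (\<Prod>p\<in>{1..m}. thv \<theta> (ek i k p) \<omega>) \<partial>P) = (\<Prod>e\<in>ek i k ` {1..m}. \<integral>\<omega>. (thv \<theta> e \<omega>) ^ (\<lambda>_. 1) e \<partial>P)"
    unfolding re by (rule prod_moment(2)[OF E]) simp
  also have "\<dots> = (\<Prod>p\<in>{1..m}. \<integral>\<omega>. thv \<theta> (ek i k p) \<omega> \<partial>P)"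
    by (subst prod.reindex[OF inj]) (simp add: comp_def)
  also have "\<dots> = (\<Prod>p\<in>{1..m}. \<mu> p)"
    using th_mom1[OF ek_in[OF i k]] by (intro prod.cong refl) (simp add: ek_def)
  finally show "(\<integral>\<omega>. (\<Prod>p\<in>{1..m}. thv \<theta> (ek i k p) \<omega>) \<partial>P) = (\<Prod>p\<in>{1..m}. \<mu> p)" .
qed

lemma term2:
  assumes i: "i \<in> multi_idx m n" and k: "k \<in> bond_tuples m r"
    and j: "j \<in> multi_idx m n" and k': "k' \<in> bond_tuples m r"
  shows "integrable P (\<lambda>\<omega>. \<Prod>p\<in>{1..m}. thv \<theta> (ek i k p) \<omega> * thv \<theta> (ek j k' p) \<omega>)"
    and "(\<integral>\<omega>. (\<Prod>p\<in>{1..m}. thv \<theta> (ek i k p) \<omega> * thv \<theta> (ek j k' p) \<omega>) \<partial>P)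
         = (\<Prod>p\<in>{1..m}. (\<mu> p)\<^sup>2 + (if ek i k p = ek j k' p then (\<sigma> p)\<^sup>2 else 0))"
proof -
  let ?e = "ek i k" and ?e' = "ek j k'"
  define mlt :: "nat \<times> nat \<times> nat \<times> nat \<Rightarrow> nat" where "mlt x = (if ?e (fst x) = ?e' (fst x) then 2 else 1::nat)" for x
  have kap: "\<And>p. p \<in> {1..m} \<Longrightarrow> fst (?e p) = p \<and> fst (?e' p) = p" by (simp add: ek_def)
  have E: "finite (?e ` {1..m} \<union> ?e' ` {1..m})" "?e ` {1..m} \<union> ?e' ` {1..m} \<subseteq> core_entries m n r"
    using ek_in[OF i k] ek_in[OF j k'] by auto
  have M: "\<And>x. x \<in> ?e ` {1..m} \<union> ?e' ` {1..m} \<Longrightarrow> mlt x \<in> {1, 2}" unfolding mlt_def by simp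
  have re: "(\<Prod>p\<in>{1..m}. thv \<theta> (?e p) \<omega> * thv \<theta> (?e' p) \<omega>)
      = (\<Prod>x\<in>?e ` {1..m} \<union> ?e' ` {1..m}. (thv \<theta> x \<omega>) ^ mlt x)" for \<omega>
  proof -
    have "(\<Prod>x\<in>?e ` {1..m} \<union> ?e' ` {1..m}. (thv \<theta> x \<omega>) ^ mlt x)
       = (\<Prod>p\<in>{1..m}. if ?e p = ?e' p then (thv \<theta> (?e p) \<omega>) ^ 2 else (thv \<theta> (?e p) \<omega>) ^ 1 * (thv \<theta> (?e' p) \<omega>) ^ 1)"
      unfolding mlt_def by (rule regroup[where h = "\<lambda>x d. (thv \<theta> x \<omega>) ^ d" and \<kappa> = fst]) (use kap in auto)
    also have "\<dots> = (\<Prod>p\<in>{1..m}. thv \<theta> (?e p) \<omega> * thv \<theta> (?e' p) \<omega>)"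
      by (intro prod.cong refl) (auto simp: power2_eq_square)
    finally show ?thesis by simp
  qed
  show "integrable P (\<lambda>\<omega>. \<Prod>p\<in>{1..m}. thv \<theta> (?e p) \<omega> * thv \<theta> (?e' p) \<omega>)"
    unfolding re by (rule prod_moment(1)[OF E M])
  have "(\<integral>\<omega>. (\<Prod>p\<in>{1..m}. thv \<theta> (?e p) \<omega> * thv \<theta> (?e' p) \<omega>) \<partial>P)
     = (\<Prod>x\<in>?e ` {1..m} \<union> ?e' ` {1..m}. \<integral>\<omega>. (thv \<theta> x \<omega>) ^ mlt x \<partial>P)"
    unfolding re by (rule prod_moment(2)[OF E M])
  also have "\<dots> = (\<Prod>p\<in>{1..m}. if ?e p = ?e' p then (\<integral>\<omega>. (thv \<theta> (?e p) \<omega>) ^ 2 \<partial>P)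
        else (\<integral>\<omega>. (thv \<theta> (?e p) \<omega>) ^ 1 \<partial>P) * (\<integral>\<omega>. (thv \<theta> (?e' p) \<omega>) ^ 1 \<partial>P))"
    unfolding mlt_def by (rule regroup[where h = "\<lambda>x d. \<integral>\<omega>. (thv \<theta> x \<omega>) ^ d \<partial>P" and \<kappa> = fst]) (use kap in auto)
  also have "\<dots> = (\<Prod>p\<in>{1..m}. (\<mu> p)\<^sup>2 + (if ?e p = ?e' p then (\<sigma> p)\<^sup>2 else 0))"
  proof (intro prod.cong refl)
    fix p assume p: "p \<in> {1..m}"
    show "(if ?e p = ?e' p then (\<integral>\<omega>. (thv \<theta> (?e p) \<omega>) ^ 2 \<partial>P)
        else (\<integral>\<omega>. (thv \<theta> (?e p) \<omega>) ^ 1 \<partial>P) * (\<integral>\<omega>. (thv \<theta> (?e' p) \<omega>) ^ 1 \<partial>P))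
        = (\<mu> p)\<^sup>2 + (if ?e p = ?e' p then (\<sigma> p)\<^sup>2 else 0)"
      using th_mom1[OF ek_in[OF i k p]] th_mom1[OF ek_in[OF j k' p]] th_mom2[OF ek_in[OF i k p]] th_mom2[OF ek_in[OF j k' p]] kap[OF p]
      by (simp add: power2_eq_square)
  qed
  finally show "(\<integral>\<omega>. (\<Prod>p\<in>{1..m}. thv \<theta> (?e p) \<omega> * thv \<theta> (?e' p) \<omega>) \<partial>P)
         = (\<Prod>p\<in>{1..m}. (\<mu> p)\<^sup>2 + (if ?e p = ?e' p then (\<sigma> p)\<^sup>2 else 0))" .
qed

lemma eta_int:
  assumes i: "i \<in> multi_idx m n"
  shows "integrable P (tt_eta m r \<theta> i)"
    and "(\<integral>\<omega>. tt_eta m r \<theta> i \<omega> \<partial>P) = (\<Sum>k\<in>bond_tuples m r. \<Prod>p\<in>{1..m}. \<mu> p)"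
proof -
  show "integrable P (tt_eta m r \<theta> i)"
    unfolding eta_eq' by (intro Bochner_Integration.integrable_sum term1(1)[OF i])
  show "(\<integral>\<omega>. tt_eta m r \<theta> i \<omega> \<partial>P) = (\<Sum>k\<in>bond_tuples m r. \<Prod>p\<in>{1..m}. \<mu> p)"
    unfolding eta_eq'
    apply (subst Bochner_Integration.integral_sum)
     apply (rule term1(1)[OF i]; assumption)
    apply (intro sum.cong refl)
    apply (rule term1(2)[OF i]; assumption)
    done
qed

lemma eta_meas: "i \<in> multi_idx m n \<Longrightarrow> tt_eta m r \<theta> i \<in> borel_measurable P"
  using eta_int(1) by (rule borel_measurable_integrable)

lemma eta_pair:
  assumes i: "i \<in> multi_idx m n" and j: "j \<in> multi_idx m n"
  shows "integrable P (\<lambda>\<omega>. tt_eta m r \<theta> i \<omega> * tt_eta m r \<theta> j \<omega>)"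
    and "(\<integral>\<omega>. tt_eta m r \<theta> i \<omega> * tt_eta m r \<theta> j \<omega> \<partial>P) =
        (\<Sum>k\<in>bond_tuples m r. \<Sum>k'\<in>bond_tuples m r.
           \<Prod>p\<in>{1..m}. (\<mu> p)\<^sup>2 + (if ek i k p = ek j k' p then (\<sigma> p)\<^sup>2 else 0))"
proof -
  have eq: "(\<lambda>\<omega>. tt_eta m r \<theta> i \<omega> * tt_eta m r \<theta> j \<omega>) =
     (\<lambda>\<omega>. \<Sum>k\<in>bond_tuples m r. \<Sum>k'\<in>bond_tuples m r. \<Prod>p\<in>{1..m}. thv \<theta> (ek i k p) \<omega> * thv \<theta> (ek j k' p) \<omega>)"
    unfolding eta_eq by (simp add: fun_eq_iff sum_product prod.distrib)
  show "integrable P (\<lambda>\<omega>. tt_eta m r \<theta> i \<omega> * tt_eta m r \<theta> j \<omega>)"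
    unfolding eq by (intro Bochner_Integration.integrable_sum term2(1)[OF i _ j])
  show "(\<integral>\<omega>. tt_eta m r \<theta> i \<omega> * tt_eta m r \<theta> j \<omega> \<partial>P) =
        (\<Sum>k\<in>bond_tuples m r. \<Sum>k'\<in>bond_tuples m r.
           \<Prod>p\<in>{1..m}. (\<mu> p)\<^sup>2 + (if ek i k p = ek j k' p then (\<sigma> p)\<^sup>2 else 0))"
    unfolding eq
    apply (subst Bochner_Integration.integral_sum)
     apply (intro Bochner_Integration.integrable_sum term2(1)[OF i _ j]; assumption)
    apply (intro sum.cong refl)
    apply (subst Bochner_Integration.integral_sum)
     apply (rule term2(1)[OF i _ j]; assumption)
    apply (intro sum.cong refl)
    apply (rule term2(2)[OF i _ j]; assumption)
    done
qed

end


lemma ab_bound: fixes a b :: real shows "\<bar>a * b\<bar> \<le> \<bar>a\<^sup>2 + b\<^sup>2\<bar>"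
proof -
  have "0 \<le> (\<bar>a\<bar> - \<bar>b\<bar>)\<^sup>2" by simp
  moreover have "(\<bar>a\<bar> - \<bar>b\<bar>)\<^sup>2 = a\<^sup>2 + b\<^sup>2 - 2 * \<bar>a\<bar> * \<bar>b\<bar>" by (simp add: power2_diff)
  moreover have "\<bar>a * b\<bar> = \<bar>a\<bar> * \<bar>b\<bar>" by (rule abs_mult)
  moreover have "0 \<le> \<bar>a\<bar> * \<bar>b\<bar>" by simp
  moreover have "0 \<le> a\<^sup>2 + b\<^sup>2" by simp
  ultimately show ?thesis by linarith
qed

lemma cov_formula:
  fixes X Z :: "'a \<Rightarrow> real"
  assumes "prob_space P" and X: "integrable P X" and Z: "integrable P Z" and XZ: "integrable P (\<lambda>\<omega>. X \<omega> * Z \<omega>)"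
  shows "cov P X Z = (\<integral>\<omega>. X \<omega> * Z \<omega> \<partial>P) - (\<integral>\<omega>. X \<omega> \<partial>P) * (\<integral>\<omega>. Z \<omega> \<partial>P)"
proof -
  interpret prob_space P by fact
  let ?a = "\<integral>\<omega>. X \<omega> \<partial>P" and ?b = "\<integral>\<omega>. Z \<omega> \<partial>P"
  have eq: "(\<lambda>\<omega>. (X \<omega> - ?a) * (Z \<omega> - ?b)) = (\<lambda>\<omega>. X \<omega> * Z \<omega> - (?b * X \<omega> + (?a * Z \<omega> - ?a * ?b)))"
    by (simp add: fun_eq_iff algebra_simps)
  have i1: "integrable P (\<lambda>\<omega>. ?b * X \<omega>)" "integrable P (\<lambda>\<omega>. ?a * Z \<omega> - ?a * ?b)"
    using X Z by auto
  have "cov P X Z = (\<integral>\<omega>. X \<omega> * Z \<omega> \<partial>P) - (\<integral>\<omega>. ?b * X \<omega> + (?a * Z \<omega> - ?a * ?b) \<partial>P)"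
    unfolding cov_def eq by (rule Bochner_Integration.integral_diff[OF XZ]) (use i1 in auto)
  also have "(\<integral>\<omega>. ?b * X \<omega> + (?a * Z \<omega> - ?a * ?b) \<partial>P) = ?b * ?a + (?a * ?b - ?a * ?b)"
    using i1 X Z by (simp add: prob_space)
  finally show ?thesis by simp
qed

context ttp begin

lemma eta_cov:
  assumes i: "i \<in> multi_idx m n" and j: "j \<in> multi_idx m n" and S: "S \<subseteq> {1..m}"
    and ag: "agree_on m S i j"
  shows "(\<integral>\<omega>. tt_eta m r \<theta> i \<omega> * tt_eta m r \<theta> j \<omega> \<partial>P)
          - (\<integral>\<omega>. tt_eta m r \<theta> i \<omega> \<partial>P) * (\<integral>\<omega>. tt_eta m r \<theta> j \<omega> \<partial>P)
       = (\<Sum>T\<in>Pow S - {{}}. Wt m r \<mu> \<sigma> T)"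
proof -
  let ?BT = "bond_tuples m r"
  have cond: "(ek i k p = ek j k' p) \<longleftrightarrow> (p \<in> S \<and> k (p - 1) = k' (p - 1) \<and> k p = k' p)" if p: "p \<in> {1..m}" for k k' p
    using ag p unfolding agree_on_def ek_def by auto
  have "(\<integral>\<omega>. tt_eta m r \<theta> i \<omega> * tt_eta m r \<theta> j \<omega> \<partial>P)
        - (\<integral>\<omega>. tt_eta m r \<theta> i \<omega> \<partial>P) * (\<integral>\<omega>. tt_eta m r \<theta> j \<omega> \<partial>P)
     = (\<Sum>k\<in>?BT. \<Sum>k'\<in>?BT. \<Prod>p\<in>{1..m}. (\<mu> p)\<^sup>2 + (if ek i k p = ek j k' p then (\<sigma> p)\<^sup>2 else 0))
       - (\<Sum>k\<in>?BT. \<Sum>k'\<in>?BT. \<Prod>p\<in>{1..m}. (\<mu> p)\<^sup>2)"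
    unfolding eta_pair(2)[OF i j] eta_int(2)[OF i] eta_int(2)[OF j] sum_product
    by (simp add: prod.distrib[symmetric] power2_eq_square)
  also have "\<dots> = (\<Sum>k\<in>?BT. \<Sum>k'\<in>?BT. (\<Prod>p\<in>{1..m}. (\<mu> p)\<^sup>2 + (if p \<in> S \<and> k (p - 1) = k' (p - 1) \<and> k p = k' p then (\<sigma> p)\<^sup>2 else 0))
       - (\<Prod>p\<in>{1..m}. (\<mu> p)\<^sup>2))"
    unfolding sum_subtractf[symmetric]
    by (intro sum.cong refl arg_cong2[where f = "(-)"] prod.cong) (simp add: cond)
  also have "\<dots> = (\<Sum>kk\<in>?BT \<times> ?BT. (\<Prod>p\<in>{1..m}. (\<mu> p)\<^sup>2 + (if p \<in> S \<and> fst kk (p - 1) = snd kk (p - 1) \<and> fst kk p = snd kk p then (\<sigma> p)\<^sup>2 else 0))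
       - (\<Prod>p\<in>{1..m}. (\<mu> p)\<^sup>2))"
    by (simp add: sum.cartesian_product split_def)
  also have "\<dots> = (\<Sum>T\<in>Pow S - {{}}. Wt m r \<mu> \<sigma> T)"
    by (rule comb_sum[OF S r_pos])
  finally show ?thesis .
qed

end


locale ttY = ttp P m n r \<theta> \<mu> \<sigma>
  for P :: "'a measure" and m :: nat and n r :: "nat \<Rightarrow> nat"
    and \<theta> :: "nat \<Rightarrow> nat \<Rightarrow> nat \<Rightarrow> nat \<Rightarrow> 'a \<Rightarrow> real"
    and \<mu> \<sigma> :: "nat \<Rightarrow> real" +
  fixes Y :: "(nat \<Rightarrow> nat) \<Rightarrow> 'a \<Rightarrow> real"
  assumes Y_meas: "\<And>i. i \<in> multi_idx m n \<Longrightarrow> Y i \<in> borel_measurable P"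
    and Y_sq: "\<And>i. i \<in> multi_idx m n \<Longrightarrow> integrable P (\<lambda>\<omega>. (Y i \<omega>)\<^sup>2)"
    and Y_cind: "cond_indep_given P (gen_sigma P (tt_eta m r \<theta>) (multi_idx m n)) Y (multi_idx m n)"
    and Y_mean: "\<And>i. i \<in> multi_idx m n \<Longrightarrow>
        AE \<omega> in P. real_cond_exp P (gen_sigma P (tt_eta m r \<theta>) (multi_idx m n)) (Y i) \<omega>
                    = tt_eta m r \<theta> i \<omega>"
begin

abbreviation "FF \<equiv> gen_sigma P (tt_eta m r \<theta>) (multi_idx m n)"

lemma subalg: "subalgebra P FF"
proof -
  let ?G = "{tt_eta m r \<theta> i -` A \<inter> space P | i A. i \<in> multi_idx m n \<and> A \<in> sets (borel :: real measure)}"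
  have G: "?G \<subseteq> sets P"
  proof
    fix x assume "x \<in> ?G"
    then obtain i A where x: "x = tt_eta m r \<theta> i -` A \<inter> space P" and i: "i \<in> multi_idx m n"
      and A: "A \<in> sets (borel :: real measure)" by blast
    show "x \<in> sets P" unfolding x by (rule measurable_sets[OF eta_meas[OF i] A])
  qed
  then have GP: "?G \<subseteq> Pow (space P)" using sets.sets_into_space by blast
  have "space FF = space P" unfolding gen_sigma_def by (rule space_measure_of_conv)
  moreover have "sets FF \<subseteq> sets P"
    unfolding gen_sigma_def sets_measure_of[OF GP] by (rule sets.sigma_sets_subset[OF G])
  ultimately show ?thesis unfolding subalgebra_def by simp
qed

lemma sfs: "sigma_finite_subalgebra P FF"
proof -
  have "finite_measure_subalgebra P FF"
    unfolding finite_measure_subalgebra_def finite_measure_subalgebra_axioms_def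
    using subalg finite_measure_axioms by simp
  then show ?thesis by (rule finite_measure_subalgebra_is_sigma_finite)
qed

lemma Y_int: "i \<in> multi_idx m n \<Longrightarrow> integrable P (Y i)"
  by (rule square_integrable_imp_integrable[OF Y_meas Y_sq])

lemma YY_int:
  assumes i: "i \<in> multi_idx m n" and j: "j \<in> multi_idx m n"
  shows "integrable P (\<lambda>\<omega>. Y i \<omega> * Y j \<omega>)"
proof (rule Bochner_Integration.integrable_bound)
  show "integrable P (\<lambda>\<omega>. (Y i \<omega>)\<^sup>2 + (Y j \<omega>)\<^sup>2)" using Y_sq[OF i] Y_sq[OF j] by simp
  show "(\<lambda>\<omega>. Y i \<omega> * Y j \<omega>) \<in> borel_measurable P" using Y_meas[OF i] Y_meas[OF j] by measurable
  show "AE \<omega> in P. norm (Y i \<omega> * Y j \<omega>) \<le> norm ((Y i \<omega>)\<^sup>2 + (Y j \<omega>)\<^sup>2)"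
  proof (rule AE_I2)
    fix \<omega> show "norm (Y i \<omega> * Y j \<omega>) \<le> norm ((Y i \<omega>)\<^sup>2 + (Y j \<omega>)\<^sup>2)"
      unfolding real_norm_def by (rule ab_bound)
  qed
qed

lemma EY:
  assumes i: "i \<in> multi_idx m n"
  shows "(\<integral>\<omega>. Y i \<omega> \<partial>P) = (\<integral>\<omega>. tt_eta m r \<theta> i \<omega> \<partial>P)"
proof -
  interpret sigma_finite_subalgebra P FF by (rule sfs)
  have "(\<integral>\<omega>. Y i \<omega> \<partial>P) = (\<integral>\<omega>. real_cond_exp P FF (Y i) \<omega> \<partial>P)"
    using real_cond_exp_int(2)[OF Y_int[OF i]] by simp
  also have "\<dots> = (\<integral>\<omega>. tt_eta m r \<theta> i \<omega> \<partial>P)"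
    by (rule integral_cong_AE[OF borel_measurable_cond_exp2 eta_meas[OF i] Y_mean[OF i]])
  finally show ?thesis .
qed

lemma EYY:
  assumes i: "i \<in> multi_idx m n" and j: "j \<in> multi_idx m n" and ij: "i \<noteq> j"
  shows "(\<integral>\<omega>. Y i \<omega> * Y j \<omega> \<partial>P) = (\<integral>\<omega>. tt_eta m r \<theta> i \<omega> * tt_eta m r \<theta> j \<omega> \<partial>P)"
proof -
  interpret sigma_finite_subalgebra P FF by (rule sfs)
  have pr: "(\<lambda>\<omega>. \<Prod>x\<in>{i, j}. Y x \<omega>) = (\<lambda>\<omega>. Y i \<omega> * Y j \<omega>)" using ij by (simp add: fun_eq_iff)
  have prem: "finite {i, j} \<and> {i, j} \<subseteq> multi_idx m n \<and>
       (\<forall>x\<in>{i, j}. (\<lambda>(z::real). z) \<in> borel_measurable borel \<and> integrable P (\<lambda>\<omega>. Y x \<omega>)) \<and>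
       integrable P (\<lambda>\<omega>. \<Prod>x\<in>{i, j}. Y x \<omega>)"
    using i j Y_int[OF i] Y_int[OF j] YY_int[OF i j] pr by simp
  have A1: "AE \<omega> in P. real_cond_exp P FF (\<lambda>\<omega>. Y i \<omega> * Y j \<omega>) \<omega>
           = real_cond_exp P FF (Y i) \<omega> * real_cond_exp P FF (Y j) \<omega>"
    using mp[OF spec[OF spec[OF Y_cind[unfolded cond_indep_given_def], of "{i, j}"], of "\<lambda>_ z. z"] prem] ij
    by (simp add: pr)
  have A: "AE \<omega> in P. real_cond_exp P FF (\<lambda>\<omega>. Y i \<omega> * Y j \<omega>) \<omega> = tt_eta m r \<theta> i \<omega> * tt_eta m r \<theta> j \<omega>"
    using A1 Y_mean[OF i] Y_mean[OF j] by eventually_elim simp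
  have "(\<integral>\<omega>. Y i \<omega> * Y j \<omega> \<partial>P) = (\<integral>\<omega>. real_cond_exp P FF (\<lambda>\<omega>. Y i \<omega> * Y j \<omega>) \<omega> \<partial>P)"
    using real_cond_exp_int(2)[OF YY_int[OF i j]] by simp
  also have "\<dots> = (\<integral>\<omega>. tt_eta m r \<theta> i \<omega> * tt_eta m r \<theta> j \<omega> \<partial>P)"
    using eta_meas[OF i] eta_meas[OF j] by (intro integral_cong_AE[OF borel_measurable_cond_exp2 _ A]) measurable
  finally show ?thesis .
qed

lemma Ccov:
  assumes S: "S \<subseteq> {1..m}" and Sne: "S \<noteq> {1..m}"
  shows "C_cov P Y m n S = (\<Sum>T\<in>Pow S - {{}}. Wt m r \<mu> \<sigma> T)"
proof (cases "S = {}")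
  case True then show ?thesis by (simp add: C_cov_def)
next
  case False
  define i0 :: "nat \<Rightarrow> nat" where "i0 = (\<lambda>_. 0)"
  define j0 :: "nat \<Rightarrow> nat" where "j0 = (\<lambda>p. if p \<in> {1..m} \<and> p \<notin> S then 1 else 0)"
  have "\<forall>p. i0 p < (if p \<in> {1..m} then n p else 1)" unfolding i0_def using n_ge by force
  then have i0: "i0 \<in> multi_idx m n" unfolding multi_idx_def by blast
  have "\<forall>p. j0 p < (if p \<in> {1..m} then n p else 1)" unfolding j0_def using n_ge by force
  then have j0: "j0 \<in> multi_idx m n" unfolding multi_idx_def by blast
  have ag0: "agree_on m S i0 j0" unfolding agree_on_def i0_def j0_def using S by auto
  define ij where "ij = (SOME ij. fst ij \<in> multi_idx m n \<and> snd ij \<in> multi_idx m n \<and> agree_on m S (fst ij) (snd ij))"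
  have "fst ij \<in> multi_idx m n \<and> snd ij \<in> multi_idx m n \<and> agree_on m S (fst ij) (snd ij)"
    unfolding ij_def by (rule someI[of _ "(i0, j0)"]) (simp add: i0 j0 ag0)
  then have i: "fst ij \<in> multi_idx m n" and j: "snd ij \<in> multi_idx m n" and ag: "agree_on m S (fst ij) (snd ij)"
    by auto
  obtain p where p: "p \<in> {1..m}" "p \<notin> S" using S Sne by blast
  have ne: "fst ij \<noteq> snd ij" using ag p unfolding agree_on_def by auto
  have "C_cov P Y m n S = cov P (Y (fst ij)) (Y (snd ij))"
    unfolding C_cov_def Let_def ij_def using False by simp
  also have "\<dots> = (\<integral>\<omega>. Y (fst ij) \<omega> * Y (snd ij) \<omega> \<partial>P) - (\<integral>\<omega>. Y (fst ij) \<omega> \<partial>P) * (\<integral>\<omega>. Y (snd ij) \<omega> \<partial>P)"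
    by (rule cov_formula[OF probP Y_int[OF i] Y_int[OF j] YY_int[OF i j]])
  also have "\<dots> = (\<integral>\<omega>. tt_eta m r \<theta> (fst ij) \<omega> * tt_eta m r \<theta> (snd ij) \<omega> \<partial>P)
          - (\<integral>\<omega>. tt_eta m r \<theta> (fst ij) \<omega> \<partial>P) * (\<integral>\<omega>. tt_eta m r \<theta> (snd ij) \<omega> \<partial>P)"
    unfolding EY[OF i] EY[OF j] EYY[OF i j ne] ..
  also have "\<dots> = (\<Sum>T\<in>Pow S - {{}}. Wt m r \<mu> \<sigma> T)"
    by (rule eta_cov[OF i j S ag])
  finally show ?thesis .
qed

end


context ttY begin

lemma v_single:
  assumes a: "a \<in> {1..m}" and ne: "{a} \<noteq> {1..m}"
  shows "v_mob P Y m n {a} = Wt m r \<mu> \<sigma> {a}"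
  unfolding v_mob_def
proof (rule mob_single)
  fix S' assume S': "S' \<subseteq> {a}"
  then have "S' \<subseteq> {1..m}" using a by auto
  moreover have "S' \<noteq> {1..m}"
  proof
    assume "S' = {1..m}"
    then have "{1..m} \<subseteq> {a}" using S' by simp
    moreover have "{a} \<subseteq> {1..m}" using a by simp
    ultimately show False using ne by blast
  qed
  ultimately show "C_cov P Y m n S' = (\<Sum>T\<in>Pow S' - {{}}. Wt m r \<mu> \<sigma> T)" by (rule Ccov)
qed

lemma v_pair:
  assumes ab: "a \<noteq> b" and a: "a \<in> {1..m}" and b: "b \<in> {1..m}" and ne: "{a, b} \<noteq> {1..m}"
  shows "v_mob P Y m n {a, b} = Wt m r \<mu> \<sigma> {a, b}"
  unfolding v_mob_def
proof (rule mob_pair[OF ab])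
  fix S' assume S': "S' \<subseteq> {a, b}"
  then have "S' \<subseteq> {1..m}" using a b by auto
  moreover have "S' \<noteq> {1..m}"
  proof
    assume "S' = {1..m}"
    then have "{1..m} \<subseteq> {a, b}" using S' by simp
    moreover have "{a, b} \<subseteq> {1..m}" using a b by simp
    ultimately show False using ne by blast
  qed
  ultimately show "C_cov P Y m n S' = (\<Sum>T\<in>Pow S' - {{}}. Wt m r \<mu> \<sigma> T)" by (rule Ccov)
qed

end

theorem mainTheorem9:
  fixes P :: "'a measure"
    and m :: nat
    and n r :: "nat \<Rightarrow> nat"
    and \<theta> :: "nat \<Rightarrow> nat \<Rightarrow> nat \<Rightarrow> nat \<Rightarrow> 'a \<Rightarrow> real"
    and \<mu> \<sigma> :: "nat \<Rightarrow> real"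
    and Y :: "(nat \<Rightarrow> nat) \<Rightarrow> 'a \<Rightarrow> real"
  assumes prob: "prob_space P"
    and n_ge: "\<And>p. p \<in> {1..m} \<Longrightarrow> n p \<ge> 2"
    and r_pos: "\<And>k. k \<in> {1..<m} \<Longrightarrow> r k \<ge> 1"
    and \<theta>_meas: "\<And>e. e \<in> core_entries m n r \<Longrightarrow>
        (\<lambda>\<omega>. \<theta> (fst e) (fst (snd e)) (fst (snd (snd e))) (snd (snd (snd e))) \<omega>) \<in> borel_measurable P"
    and \<theta>_indep: "prob_space.indep_vars P (\<lambda>_. borel)
        (\<lambda>e \<omega>. \<theta> (fst e) (fst (snd e)) (fst (snd (snd e))) (snd (snd (snd e))) \<omega>) (core_entries m n r)"
    and \<theta>_ident: "\<And>p a i b a' i' b'. (p, a, i, b) \<in> core_entries m n r \<Longrightarrow>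
        (p, a', i', b') \<in> core_entries m n r \<Longrightarrow>
        distr P borel (\<theta> p a i b) = distr P borel (\<theta> p a' i' b')"
    and \<theta>_sq: "\<And>p a i b. (p, a, i, b) \<in> core_entries m n r \<Longrightarrow>
        integrable P (\<lambda>\<omega>. (\<theta> p a i b \<omega>)\<^sup>2)"
    and \<theta>_mean: "\<And>p a i b. (p, a, i, b) \<in> core_entries m n r \<Longrightarrow>
        (\<integral>\<omega>. \<theta> p a i b \<omega> \<partial>P) = \<mu> p"
    and \<theta>_var: "\<And>p a i b. (p, a, i, b) \<in> core_entries m n r \<Longrightarrow>
        (\<integral>\<omega>. (\<theta> p a i b \<omega> - \<mu> p)\<^sup>2 \<partial>P) = (\<sigma> p)\<^sup>2"
    and \<mu>_nz: "\<And>p. p \<in> {1..m} \<Longrightarrow> \<mu> p \<noteq> 0"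
    and \<sigma>_nz: "\<And>p. p \<in> {1..m} \<Longrightarrow> \<sigma> p \<noteq> 0"
    and Y_meas: "\<And>i. i \<in> multi_idx m n \<Longrightarrow> Y i \<in> borel_measurable P"
    and Y_sq: "\<And>i. i \<in> multi_idx m n \<Longrightarrow> integrable P (\<lambda>\<omega>. (Y i \<omega>)\<^sup>2)"
    and Y_cind: "cond_indep_given P (gen_sigma P (tt_eta m r \<theta>) (multi_idx m n)) Y (multi_idx m n)"
    and Y_mean: "\<And>i. i \<in> multi_idx m n \<Longrightarrow>
        AE \<omega> in P. real_cond_exp P (gen_sigma P (tt_eta m r \<theta>) (multi_idx m n)) (Y i) \<omega>
                    = tt_eta m r \<theta> i \<omega>"
  shows "(3 \<le> m \<longrightarrow>
            real (r 1) = v_mob P Y m n {1, 2} * v_mob P Y m n {3}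
                         / (v_mob P Y m n {2} * v_mob P Y m n {1, 3}))
       \<and> (4 \<le> m \<longrightarrow>
            real (r (m - 1)) = v_mob P Y m n {m - 1, m} * v_mob P Y m n {m - 3}
                         / (v_mob P Y m n {m} * v_mob P Y m n {m - 3, m - 1}))"
proof -
  interpret T: ttY P m n r \<theta> \<mu> \<sigma> Y
    by (rule ttY.intro[OF ttp.intro[OF prob n_ge r_pos \<theta>_meas \<theta>_indep \<theta>_sq \<theta>_mean \<theta>_var]
                          ttY_axioms.intro[OF Y_meas Y_sq Y_cind Y_mean]])
  have part1: "real (r 1) = v_mob P Y m n {1, 2} * v_mob P Y m n {3}
                         / (v_mob P Y m n {2} * v_mob P Y m n {1, 3})" if m: "3 \<le> m"
  proof -
    have mm: "m \<in> {1..m}" "1 \<in> {1..m}" using m by auto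
    have nm: "A \<noteq> {1..m}" if "m \<notin> A" for A using mm(1) that by blast
    have n1: "A \<noteq> {1..m}" if "1 \<notin> A" for A using mm(2) that by blast
    have two: "(2::nat) \<in> {1..m}" using m by simp
    have n2: "A \<noteq> {1..m}" if "2 \<notin> A" for A using two that by blast
    have "v_mob P Y m n {1, 2} = Wt m r \<mu> \<sigma> {1, 2}"
      by (rule T.v_pair) (use m mm nm n1 n2 in simp_all)
    moreover have "v_mob P Y m n {3} = Wt m r \<mu> \<sigma> {3}"
      by (rule T.v_single) (use m mm nm n1 n2 in simp_all)
    moreover have "v_mob P Y m n {2} = Wt m r \<mu> \<sigma> {2}"
      by (rule T.v_single) (use m mm nm n1 n2 in simp_all)
    moreover have "v_mob P Y m n {1, 3} = Wt m r \<mu> \<sigma> {1, 3}"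
      by (rule T.v_pair) (use m mm nm n1 n2 in simp_all)
    ultimately show ?thesis using ratio1[OF \<mu>_nz \<sigma>_nz r_pos m] by simp
  qed
  have part2: "real (r (m - 1)) = v_mob P Y m n {m - 1, m} * v_mob P Y m n {m - 3}
                         / (v_mob P Y m n {m} * v_mob P Y m n {m - 3, m - 1})" if m: "4 \<le> m"
  proof -
    have mm: "m \<in> {1..m}" "1 \<in> {1..m}" using m by auto
    have nm: "A \<noteq> {1..m}" if "m \<notin> A" for A using mm(1) that by blast
    have n1: "A \<noteq> {1..m}" if "1 \<notin> A" for A using mm(2) that by blast
    have two: "(2::nat) \<in> {1..m}" using m by simp
    have n2: "A \<noteq> {1..m}" if "2 \<notin> A" for A using two that by blast
    have x1: "m - 3 \<noteq> m" "m - 1 \<noteq> m" "m - 3 \<noteq> m - 1" "m - 3 \<in> {1..m}" "m - 1 \<in> {1..m}" using m by auto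
    have "v_mob P Y m n {m - 1, m} = Wt m r \<mu> \<sigma> {m - 1, m}"
      by (rule T.v_pair) (use m mm nm n1 n2 x1 in simp_all)
    moreover have "v_mob P Y m n {m - 3} = Wt m r \<mu> \<sigma> {m - 3}"
      by (rule T.v_single) (use m mm nm n1 n2 x1 in simp_all)
    moreover have "v_mob P Y m n {m} = Wt m r \<mu> \<sigma> {m}"
      by (rule T.v_single) (use m mm nm n1 n2 x1 in simp_all)
    moreover have "v_mob P Y m n {m - 3, m - 1} = Wt m r \<mu> \<sigma> {m - 3, m - 1}"
      by (rule T.v_pair) (use m mm nm n1 n2 x1 in simp_all)
    ultimately show ?thesis using ratio2[OF \<mu>_nz \<sigma>_nz r_pos m] by simp
  qed
  show ?thesis using part1 part2 by blast
qed


end
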